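(* If $X$ satisfies $selSS^*_{cd}(\mathcal{O},\Gamma)$, has countable extent, and $|X|<\mathfrak{d}$, then $X$ is selectively strongly star-Menger.
   Context: All spaces are regular. $St(A,\mathcal{U})=\bigcup\{U\in\mathcal{U}:U\cap A\neq\emptyset\}$. $\mathfrak{d}$ is the dominating number. $X$ has countable extent if every closed discrete subset of $X$ is countable. $selSS^*_{cd}(\mathcal{O},\Gamma)$: for every sequence $(\mathcal{U}_n:n\in\omega)$ of open covers and every sequence $(D_n:n\in\omega)$ of dense subsets of $X$ there are sets $C_n\subseteq D_n$, closed and discrete in $X$, such that every $x\in X$ lies in $St(C_n,\mathcal{U}_n)$ for all but finitely many $n$. $X$ is selectively strongly star-Menger if for every sequence $(\mathcal{U}_n)$ of open covers and every sequence $(D_n)$ of dense subsets there are finite $F_n\subseteq D_n$ with $\{St(F_n,\mathcal{U}_n):n\in\omega\}$ covering $X$. *)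

theory Defs
  imports "HOL-Analysis.Analysis"
begin

definition St :: "'a set \<Rightarrow> 'a set set \<Rightarrow> 'a set" where
  "St A \<U> = \<Union>{U \<in> \<U>. U \<inter> A \<noteq> {}}"

definition open_cover :: "'a topology \<Rightarrow> 'a set set \<Rightarrow> bool" where
  "open_cover X \<U> \<longleftrightarrow> (\<forall>U\<in>\<U>. openin X U) \<and> \<Union>\<U> = topspace X"

definition dense_in :: "'a topology \<Rightarrow> 'a set \<Rightarrow> bool" where
  "dense_in X D \<longleftrightarrow> D \<subseteq> topspace X \<and> X closure_of D = topspace X"

definition closed_discrete_in :: "'a topology \<Rightarrow> 'a set \<Rightarrow> bool" where
  "closed_discrete_in X C \<longleftrightarrow> closedin X C \<and> subtopology X C = discrete_topology C"

definition countable_extent :: "'a topology \<Rightarrow> bool" where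
  "countable_extent X \<longleftrightarrow> (\<forall>C. closed_discrete_in X C \<longrightarrow> countable C)"

definition dominating :: "(nat \<Rightarrow> nat) set \<Rightarrow> bool" where
  "dominating D \<longleftrightarrow> (\<forall>g. \<exists>f\<in>D. \<forall>\<^sub>F n in sequentially. g n \<le> f n)"

text \<open>|A| < d: no dominating family has cardinality at most |A|
  (a family has cardinality at most |A| iff it is covered by the image of A).\<close>
definition card_less_dominating :: "'a set \<Rightarrow> bool" where
  "card_less_dominating A \<longleftrightarrow> (\<forall>D. dominating D \<longrightarrow> \<not> (\<exists>h::'a \<Rightarrow> nat \<Rightarrow> nat. D \<subseteq> h ` A))"

definition selSS_cd_O_Gamma :: "'a topology \<Rightarrow> bool" where
  "selSS_cd_O_Gamma X \<longleftrightarrow>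
    (\<forall>\<U> \<D>. (\<forall>n::nat. open_cover X (\<U> n)) \<and> (\<forall>n. dense_in X (\<D> n)) \<longrightarrow>
      (\<exists>C. (\<forall>n. C n \<subseteq> \<D> n \<and> closed_discrete_in X (C n)) \<and>
           (\<forall>x\<in>topspace X. \<forall>\<^sub>F n in sequentially. x \<in> St (C n) (\<U> n))))"

definition selectively_strongly_star_Menger :: "'a topology \<Rightarrow> bool" where
  "selectively_strongly_star_Menger X \<longleftrightarrow>
    (\<forall>\<U> \<D>. (\<forall>n::nat. open_cover X (\<U> n)) \<and> (\<forall>n. dense_in X (\<D> n)) \<longrightarrow>
      (\<exists>F. (\<forall>n. finite (F n) \<and> F n \<subseteq> \<D> n) \<and>
           topspace X \<subseteq> (\<Union>n. St (F n) (\<U> n))))"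

end

theory Submission
  imports Defs
begin

lemma St_mono: "A \<subseteq> B \<Longrightarrow> St A U \<subseteq> St B U"
  unfolding St_def by blast

theorem mainTheorem13:
  fixes X :: "'a topology"
  assumes "regular_space X"
    and "selSS_cd_O_Gamma X"
    and "countable_extent X"
    and "card_less_dominating (topspace X)"
  shows "selectively_strongly_star_Menger X"
  unfolding selectively_strongly_star_Menger_def
proof (intro allI impI)
  fix \<U> :: "nat \<Rightarrow> 'a set set" and \<D> :: "nat \<Rightarrow> 'a set"
  assume H: "(\<forall>n. open_cover X (\<U> n)) \<and> (\<forall>n. dense_in X (\<D> n))"
  obtain C where C1: "\<And>n. C n \<subseteq> \<D> n \<and> closed_discrete_in X (C n)"
    and C2: "\<And>x. x\<in>topspace X \<Longrightarrow> \<forall>\<^sub>F n in sequentially. x \<in> St (C n) (\<U> n)"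
  proof -
    have "\<exists>C. (\<forall>n. C n \<subseteq> \<D> n \<and> closed_discrete_in X (C n)) \<and>
           (\<forall>x\<in>topspace X. \<forall>\<^sub>F n in sequentially. x \<in> St (C n) (\<U> n))"
      using assms(2) H unfolding selSS_cd_O_Gamma_def by (elim allE impE) auto
    thus ?thesis using that by blast
  qed
  have cC: "countable (C n)" for n using assms(3) C1 unfolding countable_extent_def by blast
  define P where "P x n k \<longleftrightarrow> x \<in> St {c\<in>C n. to_nat_on (C n) c \<le> k} (\<U> n)" for x n k
  define f where "f x n = (if x \<in> St (C n) (\<U> n) then (LEAST k. P x n k) else 0)" for x n
  have Pex: "P x n (f x n)" if xs: "x \<in> St (C n) (\<U> n)" for x n
  proof -
    obtain U c where "U \<in> \<U> n" "c \<in> C n" "c \<in> U" "x \<in> U"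
      using xs unfolding St_def by blast
    hence "P x n (to_nat_on (C n) c)" unfolding P_def St_def by blast
    thus ?thesis unfolding f_def using xs by (simp add: LeastI)
  qed
  have "\<not> dominating (f ` topspace X)"
  proof
    assume "dominating (f ` topspace X)"
    moreover have "f ` topspace X \<subseteq> f ` topspace X" by (rule order_refl)
    ultimately show False using assms(4) unfolding card_less_dominating_def by metis
  qed
  then obtain g where g: "\<And>x. x \<in> topspace X \<Longrightarrow> \<not> (\<forall>\<^sub>F n in sequentially. g n \<le> f x n)"
    unfolding dominating_def by blast
  define F where "F n = {c\<in>C n. to_nat_on (C n) c \<le> g n}" for n
  have FF: "finite (F n) \<and> F n \<subseteq> \<D> n" for n
  proof
    have inj: "inj_on (to_nat_on (C n)) (F n)"
      by (rule inj_on_subset[OF inj_on_to_nat_on[OF cC[of n]]]) (auto simp: F_def)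
    have "to_nat_on (C n) ` F n \<subseteq> {..g n}" unfolding F_def by auto
    hence "finite (to_nat_on (C n) ` F n)" using finite_subset by blast
    thus "finite (F n)" using finite_imageD inj by blast
    show "F n \<subseteq> \<D> n" using C1 unfolding F_def by blast
  qed
  moreover have cov: "topspace X \<subseteq> (\<Union>n. St (F n) (\<U> n))"
  proof
    fix x assume x: "x \<in> topspace X"
    obtain N where N: "\<And>n. n \<ge> N \<Longrightarrow> x \<in> St (C n) (\<U> n)"
      using C2[OF x] unfolding eventually_sequentially by blast
    obtain n where n: "n \<ge> N" "\<not> g n \<le> f x n"
      using g[OF x] unfolding eventually_sequentially by (meson linorder_not_le)
    have "P x n (f x n)" using Pex N n by blast
    hence "x \<in> St {c\<in>C n. to_nat_on (C n) c \<le> f x n} (\<U> n)" unfolding P_def .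
    moreover have "{c\<in>C n. to_nat_on (C n) c \<le> f x n} \<subseteq> F n" using n unfolding F_def by auto
    ultimately have "x \<in> St (F n) (\<U> n)" using St_mono by (meson subsetD)
    thus "x \<in> (\<Union>n. St (F n) (\<U> n))" by (rule UN_I[OF UNIV_I])
  qed
  ultimately show "\<exists>F. (\<forall>n. finite (F n) \<and> F n \<subseteq> \<D> n) \<and> topspace X \<subseteq> (\<Union>n. St (F n) (\<U> n))"
    using FF cov by (intro exI[where x=F] conjI allI) auto
qed

end
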